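(* Let $n\ge3$, let $i_1,\dots,i_n$ be the canonical generators of $Q_n$, let $j,k<n$ with $j\ne k$, let $x\in\langle i_1,\dots,i_{n-1}\rangle$ and $s\in\{1,-1\}$. If $i_j(i_kx)=s\,(i_k(i_jx))$, then $i_j(i_k(xi_n))=s\,(i_k(i_j(xi_n)))$.
   Context: Cayley--Dickson loops: $Q_0=\{1,-1\}\subset\mathbb{R}$ with conjugation $x^*=x$. For $n\ge1$, $Q_n=\{(x,0),(x,1)\mid x\in Q_{n-1}\}$ with multiplication $(x,0)(y,0)=(xy,0)$, $(x,0)(y,1)=(yx,1)$, $(x,1)(y,0)=(xy^*,1)$, $(x,1)(y,1)=(-y^*x,0)$ and conjugation $(x,0)^*=(x^*,0)$, $(x,1)^*=(-x,1)$, where $-(x,a)=(-x,a)$. $Q_n$ is a loop with neutral element $1=(1,0,\dots,0)$; $-1=(-1,0,\dots,0)$ commutes and associates with all elements. $Q_{n-1}$ is identified with the subloop $\{(x,0)\}\subset Q_n$. Canonical generators: $i_n=(1_{Q_{n-1}},1)\in Q_n$, and $i_1,\dots,i_{n-1}$ are the canonical generators of $Q_{n-1}\subset Q_n$. *)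

theory Defs
  imports Main
begin

text \<open>Elements of the Cayley--Dickson loops.
  CBase False = 1, CBase True = -1 in Q_0; CPair x b = (x, b) with b = True meaning 1.\<close>
datatype cd = CBase bool | CPair cd bool

fun cd_level :: "cd \<Rightarrow> nat" where
  "cd_level (CBase _) = 0"
| "cd_level (CPair x _) = Suc (cd_level x)"

definition Q :: "nat \<Rightarrow> cd set" where
  "Q n = {x. cd_level x = n}"

fun cd_neg :: "cd \<Rightarrow> cd" where
  "cd_neg (CBase s) = CBase (\<not> s)"
| "cd_neg (CPair x a) = CPair (cd_neg x) a"

fun cd_conj :: "cd \<Rightarrow> cd" where
  "cd_conj (CBase s) = CBase s"
| "cd_conj (CPair x False) = CPair (cd_conj x) False"
| "cd_conj (CPair x True) = CPair (cd_neg x) True"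

lemma size_cd_neg [simp]: "size (cd_neg x) = size x"
  by (induction x) auto

lemma size_cd_conj [simp]: "size (cd_conj x) = size x"
  by (induction x rule: cd_conj.induct) auto

text \<open>Multiplication; on arguments of different levels the value is irrelevant.\<close>
function cd_mult :: "cd \<Rightarrow> cd \<Rightarrow> cd" where
  "cd_mult (CBase s) (CBase t) = CBase (s \<noteq> t)"
| "cd_mult (CPair x False) (CPair y False) = CPair (cd_mult x y) False"
| "cd_mult (CPair x False) (CPair y True) = CPair (cd_mult y x) True"
| "cd_mult (CPair x True) (CPair y False) = CPair (cd_mult x (cd_conj y)) True"
| "cd_mult (CPair x True) (CPair y True) = CPair (cd_neg (cd_mult (cd_conj y) x)) False"
| "cd_mult (CBase s) (CPair y b) = CBase False"
| "cd_mult (CPair x a) (CBase t) = CBase False"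
  by pat_completeness auto
termination
  by (relation "measure (\<lambda>(x, y). size x + size y)") auto

fun cd_one :: "nat \<Rightarrow> cd" where
  "cd_one 0 = CBase False"
| "cd_one (Suc n) = CPair (cd_one n) False"

text \<open>Canonical generator i_m of Q_n (for 1 \<le> m \<le> n).\<close>
fun cd_gen :: "nat \<Rightarrow> nat \<Rightarrow> cd" where
  "cd_gen 0 m = CBase False"
| "cd_gen (Suc n) m = (if m = Suc n then CPair (cd_one n) True else CPair (cd_gen n m) False)"

definition cd_ldiv :: "nat \<Rightarrow> cd \<Rightarrow> cd \<Rightarrow> cd" where
  "cd_ldiv n x y = (THE z. z \<in> Q n \<and> cd_mult x z = y)"

definition cd_rdiv :: "nat \<Rightarrow> cd \<Rightarrow> cd \<Rightarrow> cd" where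
  "cd_rdiv n y x = (THE z. z \<in> Q n \<and> cd_mult z x = y)"

inductive_set subloop_gen :: "nat \<Rightarrow> cd set \<Rightarrow> cd set" for n S where
  base: "x \<in> S \<Longrightarrow> x \<in> subloop_gen n S"
| one: "cd_one n \<in> subloop_gen n S"
| mult: "x \<in> subloop_gen n S \<Longrightarrow> y \<in> subloop_gen n S \<Longrightarrow> cd_mult x y \<in> subloop_gen n S"
| ldiv: "x \<in> subloop_gen n S \<Longrightarrow> y \<in> subloop_gen n S \<Longrightarrow> cd_ldiv n x y \<in> subloop_gen n S"
| rdiv: "x \<in> subloop_gen n S \<Longrightarrow> y \<in> subloop_gen n S \<Longrightarrow> cd_rdiv n y x \<in> subloop_gen n S"

end

theory Submission
  imports Defs
begin

lemma lev_neg[simp]: "cd_level (cd_neg x) = cd_level x"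
  by (induction x) auto
lemma lev_conj[simp]: "cd_level (cd_conj x) = cd_level x"
  by (induction x rule: cd_conj.induct) auto
lemma neg_neg[simp]: "cd_neg (cd_neg x) = x"
  by (induction x) auto
lemma conj_neg: "cd_conj (cd_neg x) = cd_neg (cd_conj x)"
  by (induction x rule: cd_conj.induct) auto
lemma conj_conj[simp]: "cd_conj (cd_conj x) = x"
  by (induction x rule: cd_conj.induct) (auto simp: conj_neg)
lemma neg_inj[simp]: "(cd_neg x = cd_neg y) = (x = y)"
  by (metis neg_neg)
lemma conj_inj[simp]: "(cd_conj x = cd_conj y) = (x = y)"
  by (metis conj_conj)
lemma lev_one[simp]: "cd_level (cd_one n) = n"
  by (induction n) auto
lemma lev_gen[simp]: "cd_level (cd_gen n m) = n"
  by (induction n) auto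
lemma conj_one[simp]: "cd_conj (cd_one n) = cd_one n"
  by (induction n) auto

lemma lev_mult[simp]: "cd_level x = cd_level y \<Longrightarrow> cd_level (cd_mult x y) = cd_level x"
  by (induction x y rule: cd_mult.induct) auto

lemma mult_neg: "cd_level u = cd_level v \<Longrightarrow>
  cd_mult (cd_neg u) v = cd_neg (cd_mult u v) \<and> cd_mult u (cd_neg v) = cd_neg (cd_mult u v)"
  by (induction u v rule: cd_mult.induct) (auto simp: conj_neg)

lemma mult_negL[simp]: "cd_level u = cd_level v \<Longrightarrow> cd_mult (cd_neg u) v = cd_neg (cd_mult u v)"
  using mult_neg by blast
lemma mult_negR[simp]: "cd_level u = cd_level v \<Longrightarrow> cd_mult u (cd_neg v) = cd_neg (cd_mult u v)"
  using mult_neg by blast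

lemma conj_mult: "cd_level u = cd_level v \<Longrightarrow> cd_conj (cd_mult u v) = cd_mult (cd_conj v) (cd_conj u)"
  by (induction u v rule: cd_mult.induct) (auto simp: conj_neg)

lemma mult_one: "cd_level y = n \<Longrightarrow> cd_mult (cd_one n) y = y \<and> cd_mult y (cd_one n) = y"
proof (induction n arbitrary: y)
  case 0 then show ?case by (cases y) auto
next
  case (Suc n)
  then obtain y' b where "y = CPair y' b" "cd_level y' = n" by (cases y) auto
  with Suc show ?case by (cases b) auto
qed

lemma conj_cases: "cd_conj y = y \<or> cd_conj y = cd_neg y"
  by (induction y rule: cd_conj.induct) auto

lemma conj_gen: "1 \<le> j \<Longrightarrow> j \<le> m \<Longrightarrow> cd_conj (cd_gen m j) = cd_neg (cd_gen m j)"
  by (induction m) auto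

lemma cancel: "cd_level x = n \<Longrightarrow> cd_level y = n \<Longrightarrow> cd_level z = n \<Longrightarrow>
  (cd_mult x y = cd_mult x z \<longrightarrow> y = z) \<and> (cd_mult y x = cd_mult z x \<longrightarrow> y = z)"
proof (induction n arbitrary: x y z)
  case 0 then show ?case by (cases x; cases y; cases z) auto
next
  case (Suc n)
  obtain x' a where x: "x = CPair x' a" "cd_level x' = n" using Suc by (cases x) auto
  obtain y' b where y: "y = CPair y' b" "cd_level y' = n" using Suc by (cases y) auto
  obtain z' c where z: "z = CPair z' c" "cd_level z' = n" using Suc by (cases z) auto
  have L: "\<And>p q. cd_level p = n \<Longrightarrow> cd_level q = n \<Longrightarrow> cd_mult x' p = cd_mult x' q \<Longrightarrow> p = q"
    using Suc.IH x by blast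
  have R: "\<And>p q. cd_level p = n \<Longrightarrow> cd_level q = n \<Longrightarrow> cd_mult p x' = cd_mult q x' \<Longrightarrow> p = q"
    using Suc.IH x by blast
  have Lc: "\<And>p q. cd_level p = n \<Longrightarrow> cd_level q = n \<Longrightarrow> cd_mult (cd_conj x') p = cd_mult (cd_conj x') q \<Longrightarrow> p = q"
    using Suc.IH x by (metis lev_conj)
  have Rc: "\<And>p q. cd_level p = n \<Longrightarrow> cd_level q = n \<Longrightarrow> cd_mult p (cd_conj x') = cd_mult q (cd_conj x') \<Longrightarrow> p = q"
    using Suc.IH x by (metis lev_conj)
  show ?case unfolding x y z
    apply (cases a; cases b; cases c)
    apply (simp_all only: cd_mult.simps cd.inject neg_inj bool.simps simp_thms)
    using x y z L R Lc Rc by (metis lev_conj conj_inj)+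
qed

lemma finQ: "finite (Q n)"
proof (induction n)
  case 0
  have "Q 0 = CBase ` UNIV" unfolding Q_def by (auto, case_tac x, auto)
  then show ?case by simp
next
  case (Suc n)
  have "Q (Suc n) = (\<lambda>(x,b). CPair x b) ` (Q n \<times> UNIV)" unfolding Q_def
    by (auto, case_tac x, auto)
  then show ?case using Suc by simp
qed

lemma ldiv_ex: "x \<in> Q n \<Longrightarrow> y \<in> Q n \<Longrightarrow> \<exists>!z. z \<in> Q n \<and> cd_mult x z = y"
proof -
  assume x: "x \<in> Q n" and y: "y \<in> Q n"
  have inj: "inj_on (cd_mult x) (Q n)" using cancel x unfolding inj_on_def Q_def by blast
  have sub: "cd_mult x ` Q n \<subseteq> Q n" using x unfolding Q_def by auto
  have "cd_mult x ` Q n = Q n"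
    using inj sub finQ by (simp add: endo_inj_surj)
  then have "\<exists>z\<in>Q n. cd_mult x z = y" using y by (metis imageE)
  then show ?thesis using inj unfolding inj_on_def by blast
qed

lemma rdiv_ex: "x \<in> Q n \<Longrightarrow> y \<in> Q n \<Longrightarrow> \<exists>!z. z \<in> Q n \<and> cd_mult z x = y"
proof -
  assume x: "x \<in> Q n" and y: "y \<in> Q n"
  have inj: "inj_on (\<lambda>z. cd_mult z x) (Q n)" using cancel x unfolding inj_on_def Q_def by blast
  have sub: "(\<lambda>z. cd_mult z x) ` Q n \<subseteq> Q n" using x unfolding Q_def by auto
  have "(\<lambda>z. cd_mult z x) ` Q n = Q n"
    using inj sub finQ by (simp add: endo_inj_surj)
  then have "\<exists>z\<in>Q n. cd_mult z x = y" using y by (metis (no_types, lifting) imageE)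
  then show ?thesis using inj unfolding inj_on_def by blast
qed

lemma sub_shape: "x \<in> subloop_gen (Suc m) {cd_gen (Suc m) i | i. 1 \<le> i \<and> i \<le> Suc m - 1}
  \<Longrightarrow> \<exists>y. x = CPair y False \<and> cd_level y = m"
proof (induction rule: subloop_gen.induct)
  case (base x) then show ?case by auto
next
  case one then show ?case by auto
next
  case (mult x y) then show ?case by auto
next
  case (ldiv x y)
  then have q: "x \<in> Q (Suc m)" "y \<in> Q (Suc m)" unfolding Q_def by auto
  let ?z = "cd_ldiv (Suc m) x y"
  have "?z \<in> Q (Suc m) \<and> cd_mult x ?z = y"
    unfolding cd_ldiv_def by (rule theI', rule ldiv_ex[OF q])
  moreover obtain z' c where "?z = CPair z' c" using calculation unfolding Q_def
    by (cases ?z) auto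
  ultimately show ?case using ldiv.IH unfolding Q_def by (cases c) auto
next
  case (rdiv x y)
  then have q: "x \<in> Q (Suc m)" "y \<in> Q (Suc m)" unfolding Q_def by auto
  let ?z = "cd_rdiv (Suc m) y x"
  have "?z \<in> Q (Suc m) \<and> cd_mult ?z x = y"
    unfolding cd_rdiv_def by (rule theI', rule rdiv_ex[OF q])
  moreover obtain z' c where "?z = CPair z' c" using calculation unfolding Q_def
    by (cases ?z) auto
  ultimately show ?case using rdiv.IH unfolding Q_def by (cases c) auto
qed

lemma core:
  assumes lv: "cd_level a = m" "cd_level b = m" "cd_level y = m"
    and ca: "cd_conj a = cd_neg a" and cb: "cd_conj b = cd_neg b"
    and t: "t = cd_one m \<or> t = cd_neg (cd_one m)"
    and h: "cd_mult a (cd_mult b y) = cd_mult t (cd_mult b (cd_mult a y))"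
  shows "cd_mult (cd_mult y b) a = cd_mult (cd_mult (cd_mult y a) b) t"
proof -
  have one: "\<And>u. cd_level u = m \<Longrightarrow> cd_mult (cd_one m) u = u \<and> cd_mult u (cd_one m) = u"
    using mult_one by blast
  have "cd_conj (cd_mult a (cd_mult b y)) = cd_conj (cd_mult t (cd_mult b (cd_mult a y)))"
    using h by simp
  then have h2: "cd_mult (cd_mult (cd_conj y) b) a = cd_mult (cd_mult (cd_mult (cd_conj y) a) b) t"
    using lv t one by (auto simp: conj_mult ca cb conj_neg)
  from conj_cases[of y] show ?thesis
  proof
    assume "cd_conj y = y" then show ?thesis using h2 by simp
  next
    assume "cd_conj y = cd_neg y" then show ?thesis using h2 lv t one
      by (auto simp del: neg_inj) (metis neg_neg lev_mult)+
  qed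
qed

theorem mainTheorem9:
  fixes n j k :: nat and x s :: cd
  assumes "n \<ge> 3"
    and "1 \<le> j" and "j < n" and "1 \<le> k" and "k < n" and "j \<noteq> k"
    and "x \<in> subloop_gen n {cd_gen n m | m. 1 \<le> m \<and> m \<le> n - 1}"
    and "s \<in> {cd_one n, cd_neg (cd_one n)}"
    and "cd_mult (cd_gen n j) (cd_mult (cd_gen n k) x)
         = cd_mult s (cd_mult (cd_gen n k) (cd_mult (cd_gen n j) x))"
  shows "cd_mult (cd_gen n j) (cd_mult (cd_gen n k) (cd_mult x (cd_gen n n)))
         = cd_mult s (cd_mult (cd_gen n k) (cd_mult (cd_gen n j) (cd_mult x (cd_gen n n))))"
proof -
  obtain m where n: "n = Suc m" using assms(1) by (cases n) auto
  obtain y where x: "x = CPair y False" "cd_level y = m"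
    using sub_shape assms(7) unfolding n by blast
  obtain t where s: "s = CPair t False" and t: "t = cd_one m \<or> t = cd_neg (cd_one m)"
    using assms(8) unfolding n by auto
  have gj: "cd_gen n j = CPair (cd_gen m j) False" using assms(3) n by simp
  have gk: "cd_gen n k = CPair (cd_gen m k) False" using assms(5) n by simp
  have gn: "cd_gen n n = CPair (cd_one m) True" using n by simp
  have ca: "cd_conj (cd_gen m j) = cd_neg (cd_gen m j)" using assms n by (intro conj_gen) auto
  have cb: "cd_conj (cd_gen m k) = cd_neg (cd_gen m k)" using assms n by (intro conj_gen) auto
  have one: "cd_mult (cd_one m) y = y" using mult_one x by blast
  have h: "cd_mult (cd_gen m j) (cd_mult (cd_gen m k) y) = cd_mult t (cd_mult (cd_gen m k) (cd_mult (cd_gen m j) y))"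
    using assms(9) unfolding gj gk x s by simp
  have c: "cd_mult (cd_mult y (cd_gen m k)) (cd_gen m j) = cd_mult (cd_mult (cd_mult y (cd_gen m j)) (cd_gen m k)) t"
    by (rule core[OF _ _ _ ca cb t h]) (use x in auto)
  show ?thesis unfolding gj gk gn x s using one c by simp
qed

end
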